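(* Let $Q$ be a finite (right or left) Bol loop of odd order and let $H$ be a normal subloop of $Q$ of order $3$. Then $H\le Z(Q)$.
   Context: A loop is a set with a binary multiplication and a two-sided identity $1$ in which all left and right translations are bijections. A loop is right Bol if it satisfies $((xy)z)y=x((yz)y)$, left Bol if it satisfies $y(z(yx))=(y(zy))x$. A subloop is normal if it is invariant under the inner mapping group (the stabilizer of $1$ in the group generated by all left and right translations). The nucleus $N(Q)$ is the set of $x\in Q$ with $x\cdot yz=xy\cdot z$, $y\cdot xz=yx\cdot z$, $y\cdot zx=yz\cdot x$ for all $y,z$; the center is $Z(Q)=\{x\in N(Q): xy=yx\text{ for all }y\in Q\}$. *)

theory Defs
  imports Main
begin

definition loop :: "'a set \<Rightarrow> ('a \<Rightarrow> 'a \<Rightarrow> 'a) \<Rightarrow> 'a \<Rightarrow> bool" where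
  "loop Q m e \<longleftrightarrow> e \<in> Q \<and> (\<forall>x\<in>Q. \<forall>y\<in>Q. m x y \<in> Q)
     \<and> (\<forall>x\<in>Q. m e x = x \<and> m x e = x)
     \<and> (\<forall>x\<in>Q. bij_betw (\<lambda>y. m x y) Q Q \<and> bij_betw (\<lambda>y. m y x) Q Q)"

definition right_bol :: "'a set \<Rightarrow> ('a \<Rightarrow> 'a \<Rightarrow> 'a) \<Rightarrow> bool" where
  "right_bol Q m \<longleftrightarrow> (\<forall>x\<in>Q. \<forall>y\<in>Q. \<forall>z\<in>Q. m (m (m x y) z) y = m x (m (m y z) y))"

definition left_bol :: "'a set \<Rightarrow> ('a \<Rightarrow> 'a \<Rightarrow> 'a) \<Rightarrow> bool" where
  "left_bol Q m \<longleftrightarrow> (\<forall>x\<in>Q. \<forall>y\<in>Q. \<forall>z\<in>Q. m y (m z (m y x)) = m (m y (m z y)) x)"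

definition ltrans :: "'a set \<Rightarrow> ('a \<Rightarrow> 'a \<Rightarrow> 'a) \<Rightarrow> 'a \<Rightarrow> 'a \<Rightarrow> 'a" where
  "ltrans Q m x = (\<lambda>y. if y \<in> Q then m x y else y)"

definition rtrans :: "'a set \<Rightarrow> ('a \<Rightarrow> 'a \<Rightarrow> 'a) \<Rightarrow> 'a \<Rightarrow> 'a \<Rightarrow> 'a" where
  "rtrans Q m x = (\<lambda>y. if y \<in> Q then m y x else y)"

definition ltrans_inv :: "'a set \<Rightarrow> ('a \<Rightarrow> 'a \<Rightarrow> 'a) \<Rightarrow> 'a \<Rightarrow> 'a \<Rightarrow> 'a" where
  "ltrans_inv Q m x = (\<lambda>y. if y \<in> Q then (THE z. z \<in> Q \<and> m x z = y) else y)"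

definition rtrans_inv :: "'a set \<Rightarrow> ('a \<Rightarrow> 'a \<Rightarrow> 'a) \<Rightarrow> 'a \<Rightarrow> 'a \<Rightarrow> 'a" where
  "rtrans_inv Q m x = (\<lambda>y. if y \<in> Q then (THE z. z \<in> Q \<and> m z x = y) else y)"

inductive_set mlt_group :: "'a set \<Rightarrow> ('a \<Rightarrow> 'a \<Rightarrow> 'a) \<Rightarrow> ('a \<Rightarrow> 'a) set"
  for Q m where
  mlt_id: "id \<in> mlt_group Q m"
| mlt_L: "x \<in> Q \<Longrightarrow> f \<in> mlt_group Q m \<Longrightarrow> ltrans Q m x \<circ> f \<in> mlt_group Q m"
| mlt_R: "x \<in> Q \<Longrightarrow> f \<in> mlt_group Q m \<Longrightarrow> rtrans Q m x \<circ> f \<in> mlt_group Q m"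
| mlt_Linv: "x \<in> Q \<Longrightarrow> f \<in> mlt_group Q m \<Longrightarrow> ltrans_inv Q m x \<circ> f \<in> mlt_group Q m"
| mlt_Rinv: "x \<in> Q \<Longrightarrow> f \<in> mlt_group Q m \<Longrightarrow> rtrans_inv Q m x \<circ> f \<in> mlt_group Q m"

definition inn_group :: "'a set \<Rightarrow> ('a \<Rightarrow> 'a \<Rightarrow> 'a) \<Rightarrow> 'a \<Rightarrow> ('a \<Rightarrow> 'a) set" where
  "inn_group Q m e = {f \<in> mlt_group Q m. f e = e}"

definition subloop :: "'a set \<Rightarrow> 'a set \<Rightarrow> ('a \<Rightarrow> 'a \<Rightarrow> 'a) \<Rightarrow> 'a \<Rightarrow> bool" where
  "subloop H Q m e \<longleftrightarrow> H \<subseteq> Q \<and> e \<in> H \<and> (\<forall>x\<in>H. \<forall>y\<in>H. m x y \<in> H)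
     \<and> (\<forall>a\<in>H. \<forall>b\<in>H. \<forall>z\<in>Q. (m a z = b \<longrightarrow> z \<in> H) \<and> (m z a = b \<longrightarrow> z \<in> H))"

definition normal_subloop :: "'a set \<Rightarrow> 'a set \<Rightarrow> ('a \<Rightarrow> 'a \<Rightarrow> 'a) \<Rightarrow> 'a \<Rightarrow> bool" where
  "normal_subloop H Q m e \<longleftrightarrow> subloop H Q m e \<and> (\<forall>f \<in> inn_group Q m e. f ` H = H)"

definition nucleus :: "'a set \<Rightarrow> ('a \<Rightarrow> 'a \<Rightarrow> 'a) \<Rightarrow> 'a set" where
  "nucleus Q m = {x \<in> Q. \<forall>y\<in>Q. \<forall>z\<in>Q. m x (m y z) = m (m x y) z
      \<and> m y (m x z) = m (m y x) z \<and> m y (m z x) = m (m y z) x}"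

definition center :: "'a set \<Rightarrow> ('a \<Rightarrow> 'a \<Rightarrow> 'a) \<Rightarrow> 'a set" where
  "center Q m = {x \<in> nucleus Q m. \<forall>y\<in>Q. m x y = m y x}"

end

theory Submission
  imports Defs
begin

locale qloop =
  fixes Q :: "'a set" and mult :: "'a \<Rightarrow> 'a \<Rightarrow> 'a" (infixl "\<cdot>" 70) and e :: 'a
  assumes lp: "loop Q (\<cdot>) e"
begin

lemma e_in: "e \<in> Q" using lp unfolding loop_def by blast
lemma cl: "x \<in> Q \<Longrightarrow> y \<in> Q \<Longrightarrow> x \<cdot> y \<in> Q" using lp unfolding loop_def by blast
lemma lid: "x \<in> Q \<Longrightarrow> e \<cdot> x = x" using lp unfolding loop_def by blast
lemma rid: "x \<in> Q \<Longrightarrow> x \<cdot> e = x" using lp unfolding loop_def by blast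
lemma lbij: "x \<in> Q \<Longrightarrow> bij_betw (\<lambda>y. x \<cdot> y) Q Q" using lp unfolding loop_def by blast
lemma rbij: "x \<in> Q \<Longrightarrow> bij_betw (\<lambda>y. y \<cdot> x) Q Q" using lp unfolding loop_def by blast
lemma lcan: "x \<in> Q \<Longrightarrow> y \<in> Q \<Longrightarrow> z \<in> Q \<Longrightarrow> x \<cdot> y = x \<cdot> z \<Longrightarrow> y = z"
  using lbij[of x] unfolding bij_betw_def inj_on_def by blast
lemma rcan: "x \<in> Q \<Longrightarrow> y \<in> Q \<Longrightarrow> z \<in> Q \<Longrightarrow> y \<cdot> x = z \<cdot> x \<Longrightarrow> y = z"
  using rbij[of x] unfolding bij_betw_def inj_on_def by blast
lemma ldiv: "x \<in> Q \<Longrightarrow> z \<in> Q \<Longrightarrow> \<exists>y\<in>Q. x \<cdot> y = z"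
  using lbij[of x] unfolding bij_betw_def by (metis imageE)
lemma rdiv: "x \<in> Q \<Longrightarrow> z \<in> Q \<Longrightarrow> \<exists>y\<in>Q. y \<cdot> x = z"
  using rbij[of x] unfolding bij_betw_def by (metis imageE)

end

locale rbol = qloop +
  assumes rb: "right_bol Q (\<cdot>)"
begin

lemma bol: "x \<in> Q \<Longrightarrow> y \<in> Q \<Longrightarrow> z \<in> Q \<Longrightarrow> ((x \<cdot> y) \<cdot> z) \<cdot> y = x \<cdot> ((y \<cdot> z) \<cdot> y)"
  using rb unfolding right_bol_def by blast

definition pw :: "'a \<Rightarrow> nat \<Rightarrow> 'a" where
  "pw y n = ((\<lambda>z. z \<cdot> y) ^^ n) e"

lemma fp_in: "y \<in> Q \<Longrightarrow> z \<in> Q \<Longrightarrow> ((\<lambda>z. z \<cdot> y) ^^ n) z \<in> Q"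
  by (induction n) (auto simp: cl)

lemma pw_in: "y \<in> Q \<Longrightarrow> pw y n \<in> Q"
  unfolding pw_def using fp_in e_in by blast

lemma pw_mult: "y \<in> Q \<Longrightarrow> z \<in> Q \<Longrightarrow> z \<cdot> pw y n = ((\<lambda>z. z \<cdot> y) ^^ n) z"
proof (induction n arbitrary: z rule: less_induct)
  case (less n)
  show ?case
  proof (cases n)
    case 0 then show ?thesis using less by (simp add: pw_def rid)
  next
    case (Suc k) note k = this
    show ?thesis
    proof (cases k)
      case 0 then show ?thesis using less k by (simp add: pw_def lid e_in)
    next
      case (Suc j)
      have n: "n = Suc (Suc j)" using k Suc by simp
      have IH: "\<And>z. z \<in> Q \<Longrightarrow> z \<cdot> pw y j = ((\<lambda>z. z \<cdot> y) ^^ j) z" using less n by auto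
      have a0: "pw y (Suc j) = ((\<lambda>z. z \<cdot> y) ^^ j) y"
        unfolding pw_def funpow_Suc_right comp_def using lid less.prems e_in by simp
      have a: "y \<cdot> pw y j = pw y (Suc j)"
        using IH[of y] less.prems a0 by simp
      have b0: "((\<lambda>z. z \<cdot> y) ^^ Suc j) z = ((\<lambda>z. z \<cdot> y) ^^ j) (z \<cdot> y)"
        by (simp only: funpow_Suc_right comp_apply)
      have b: "(z \<cdot> y) \<cdot> pw y j = ((\<lambda>z. z \<cdot> y) ^^ Suc j) z"
        using IH[of "z \<cdot> y"] less.prems cl b0 by simp
      have "((z \<cdot> y) \<cdot> pw y j) \<cdot> y = z \<cdot> ((y \<cdot> pw y j) \<cdot> y)"
        using bol less.prems pw_in by blast
      then show ?thesis using a b n by (simp add: pw_def)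
    qed
  qed
qed

lemma pw0: "pw y 0 = e" by (simp add: pw_def)
lemma pw1: "y \<in> Q \<Longrightarrow> pw y 1 = y" by (simp add: pw_def lid)

lemma pw_add_r: "y \<in> Q \<Longrightarrow> z \<in> Q \<Longrightarrow> (z \<cdot> pw y a) \<cdot> pw y b = z \<cdot> pw y (a + b)"
proof -
  assume y: "y \<in> Q" and z: "z \<in> Q"
  have "(z \<cdot> pw y a) \<cdot> pw y b = ((\<lambda>z. z \<cdot> y) ^^ b) (z \<cdot> pw y a)"
    using pw_mult[OF y, of "z \<cdot> pw y a" b] cl pw_in y z by blast
  also have "\<dots> = ((\<lambda>z. z \<cdot> y) ^^ b) (((\<lambda>z. z \<cdot> y) ^^ a) z)"
    using pw_mult[OF y z, of a] by simp
  also have "\<dots> = ((\<lambda>z. z \<cdot> y) ^^ (b + a)) z" by (simp add: funpow_add)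
  also have "\<dots> = z \<cdot> pw y (a + b)" using pw_mult[OF y z, of "a+b"] by (simp add: add.commute)
  finally show ?thesis .
qed

lemma pw_add: "y \<in> Q \<Longrightarrow> pw y a \<cdot> pw y b = pw y (a + b)"
  using pw_add_r[of y e a b] e_in pw_in by (simp add: lid)

lemma pw_sub: assumes y: "y \<in> Q" and "pw y a = pw y b" "a < b" shows "pw y (b - a) = e"
proof -
  have "pw y a \<cdot> pw y (b - a) = pw y a \<cdot> e"
    using assms pw_add[of y a "b - a"] pw_in[of y] by (simp add: rid)
  thus ?thesis using lcan pw_in y e_in by blast
qed

lemma odd_order:
  assumes y: "y \<in> Q" and fin: "finite Q" and od: "odd (card Q)"
  shows "\<exists>M. odd M \<and> pw y M = e"
proof -
  have "\<not> inj_on (pw y) {0..card Q}"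
  proof
    assume "inj_on (pw y) {0..card Q}"
    hence "card (pw y ` {0..card Q}) = card {0..card Q}" by (rule card_image)
    moreover have "pw y ` {0..card Q} \<subseteq> Q" using pw_in y by auto
    hence "card (pw y ` {0..card Q}) \<le> card Q" using fin card_mono by blast
    ultimately show False by simp
  qed
  then obtain a b where ab: "a \<noteq> b" "pw y a = pw y b" unfolding inj_on_def by blast
  have ex: "\<exists>n. 0 < n \<and> pw y n = e"
  proof (cases "a < b")
    case True then show ?thesis using pw_sub[OF y ab(2)] by (intro exI[of _ "b - a"]) auto
  next
    case False then have "b < a" using ab by simp
    then show ?thesis using pw_sub[OF y ab(2)[symmetric]] by (intro exI[of _ "a - b"]) auto
  qed
  define M where "M = (LEAST n. 0 < n \<and> pw y n = e)"
  have M: "0 < M" "pw y M = e" using LeastI_ex[OF ex] unfolding M_def by auto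
  have Mmin: "\<And>n. 0 < n \<Longrightarrow> n < M \<Longrightarrow> pw y n \<noteq> e" using not_less_Least unfolding M_def by blast
  have pwM: "pw y (M * q) = e" for q
  proof (induction q)
    case 0 then show ?case by (simp add: pw0)
  next
    case (Suc q) then show ?case using pw_add[OF y, of "M * q" M] M e_in by (simp add: lid add.commute)
  qed
  have pwn: "pw y (n + M * q) = pw y n" for n q
    using pw_add[OF y, of n "M * q"] pwM pw_in[OF y] by (simp add: rid)
  define orb where "orb z = (\<lambda>n. z \<cdot> pw y n) ` {..<M}" for z
  have orb_all: "orb z = range (\<lambda>n. z \<cdot> pw y n)" for z
  proof -
    have "z \<cdot> pw y n \<in> orb z" for n
    proof -
      have "pw y n = pw y (n mod M + M * (n div M))" by simp
      also have "\<dots> = pw y (n mod M)" using pwn by blast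
      finally show ?thesis unfolding orb_def using M by auto
    qed
    then show ?thesis unfolding orb_def by auto
  qed
  have orb_sub: "z \<in> Q \<Longrightarrow> orb z \<subseteq> Q" for z unfolding orb_def using cl pw_in y by auto
  have orb_self: "z \<in> Q \<Longrightarrow> z \<in> orb z" for z unfolding orb_def using M pw0 rid
    by (auto intro!: image_eqI[of _ _ 0])
  have card_orb: "z \<in> Q \<Longrightarrow> card (orb z) = M" for z
  proof -
    assume z: "z \<in> Q"
    have "inj_on (\<lambda>n. z \<cdot> pw y n) {..<M}"
    proof (rule inj_onI)
      fix a b assume a: "a \<in> {..<M}" and b: "b \<in> {..<M}" and eq: "z \<cdot> pw y a = z \<cdot> pw y b"
      have ab: "pw y a = pw y b" using lcan[OF z _ _ eq] pw_in y by blast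
      show "a = b"
      proof (rule ccontr)
        assume "a \<noteq> b"
        then consider "a < b" | "b < a" by linarith
        then show False
        proof cases
          case 1
          have "b - a < M" using b by auto
          then show ?thesis using pw_sub[OF y ab] Mmin[of "b - a"] 1 by auto
        next
          case 2
          have "a - b < M" using a by auto
          then show ?thesis using pw_sub[OF y ab[symmetric]] Mmin[of "a - b"] 2 by auto
        qed
      qed
    qed
    then show ?thesis unfolding orb_def by (simp add: card_image)
  qed
  have orb_eq: "z \<in> Q \<Longrightarrow> w \<in> orb z \<Longrightarrow> orb w = orb z" for z w
  proof -
    assume z: "z \<in> Q" and w: "w \<in> orb z"
    then obtain a where a: "w = z \<cdot> pw y a" unfolding orb_def by auto
    have "orb w = range (\<lambda>n. z \<cdot> pw y (a + n))"
      unfolding orb_all a using pw_add_r[OF y z] by simp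
    also have "\<dots> = range (\<lambda>n. z \<cdot> pw y n)"
    proof
      show "range (\<lambda>n. z \<cdot> pw y (a + n)) \<subseteq> range (\<lambda>n. z \<cdot> pw y n)" by auto
      show "range (\<lambda>n. z \<cdot> pw y n) \<subseteq> range (\<lambda>n. z \<cdot> pw y (a + n))"
      proof
        fix x assume "x \<in> range (\<lambda>n. z \<cdot> pw y n)"
        then obtain n where n: "x = z \<cdot> pw y n" by auto
        have "a \<le> M * a" using M by simp
        hence eq: "a + (n + (M * a - a)) = n + M * a" by arith
        have "z \<cdot> pw y (a + (n + (M * a - a))) = x" unfolding eq pwn n ..
        then show "x \<in> range (\<lambda>n. z \<cdot> pw y (a + n))" by (metis rangeI)
      qed
    qed
    finally show ?thesis using orb_all by simp
  qed
  have "M * card (orb ` Q) = card (\<Union> (orb ` Q))"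
  proof (rule card_partition)
    show "finite (orb ` Q)" using fin by simp
    show "finite (\<Union> (orb ` Q))" using fin orb_sub by (meson UN_least finite_subset)
    show "\<And>c. c \<in> orb ` Q \<Longrightarrow> card c = M" using card_orb by auto
    show "c1 \<inter> c2 = {}" if c1: "c1 \<in> orb ` Q" and c2: "c2 \<in> orb ` Q" and ne: "c1 \<noteq> c2" for c1 c2
      proof (rule ccontr)
        assume "c1 \<inter> c2 \<noteq> {}"
        then obtain w where w: "w \<in> c1" "w \<in> c2" by blast
        obtain z1 z2 where z: "z1 \<in> Q" "z2 \<in> Q" "c1 = orb z1" "c2 = orb z2" using c1 c2 by blast
        show False using orb_eq[OF z(1)] orb_eq[OF z(2)] w z ne by metis
      qed
  qed
  moreover have "\<Union> (orb ` Q) = Q" using orb_sub orb_self by blast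
  ultimately have "M dvd card Q" by (metis dvd_triv_left)
  hence "odd M" using od by (meson dvd_trans even_two_times_div_two odd_two_times_div_two_nat dvdI)
  thus ?thesis using M by blast
qed

end
locale rbolH = rbol +
  fixes H :: "'a set" and h :: 'a
  assumes fin: "finite Q" and od: "odd (card Q)"
  and HQ: "H \<subseteq> Q" and eH: "e \<in> H" and Hcl: "\<And>a b. a \<in> H \<Longrightarrow> b \<in> H \<Longrightarrow> a \<cdot> b \<in> H"
  and cH: "card H = 3"
  and B1: "\<And>x z k. x \<in> Q \<Longrightarrow> z \<in> Q \<Longrightarrow> k \<in> H \<Longrightarrow> \<exists>k'\<in>H. x \<cdot> (k \<cdot> z) = k' \<cdot> (x \<cdot> z)"
  and B2: "\<And>x z k. x \<in> Q \<Longrightarrow> z \<in> Q \<Longrightarrow> k \<in> H \<Longrightarrow> \<exists>k'\<in>H. (k \<cdot> z) \<cdot> x = k' \<cdot> (z \<cdot> x)"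
  and hH: "h \<in> H" and hne: "h \<noteq> e"
begin

definition h2 where "h2 = h \<cdot> h"

lemma hQ: "h \<in> Q" using hH HQ by blast
lemma h2H: "h2 \<in> H" using Hcl hH h2_def by simp
lemma h2Q: "h2 \<in> Q" using h2H HQ by blast
lemma finH: "finite H" using cH by (metis card.infinite zero_neq_numeral)

lemma three: assumes "a \<in> H" "b \<in> H" "c \<in> H" "a \<noteq> b" "a \<noteq> c" "b \<noteq> c"
  shows "H = {a, b, c}"
proof -
  have "card {a, b, c} = 3" using assms by simp
  moreover have "{a, b, c} \<subseteq> H" using assms by simp
  ultimately show ?thesis using card_subset_eq[OF finH] cH by metis
qed

lemma h2_ne_h: "h2 \<noteq> h"
proof
  assume "h2 = h"
  hence "h \<cdot> h = h \<cdot> e" using rid hQ h2_def by simp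
  thus False using lcan[OF hQ hQ e_in] hne by blast
qed

lemma h2_ne_e: "h2 \<noteq> e"
proof
  assume hh: "h2 = e"
  have "card {e, h} \<le> 2" by (simp add: card_insert_if)
  hence "H \<noteq> {e, h}" using cH by auto
  then obtain g where g: "g \<in> H" "g \<noteq> e" "g \<noteq> h" using eH hH by blast
  have gQ: "g \<in> Q" using g HQ by blast
  have Hg: "H = {e, h, g}" using three[OF eH hH g(1)] hne g by simp
  have "h \<cdot> g \<in> H" using Hcl hH g by blast
  moreover have "h \<cdot> g \<noteq> h" using lcan[OF hQ gQ e_in] rid[OF hQ] g by metis
  moreover have "h \<cdot> g \<noteq> e" using lcan[OF hQ gQ hQ] hh h2_def g by metis
  moreover have "h \<cdot> g \<noteq> g" using rcan[OF gQ hQ e_in] lid[OF gQ] hne by metis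
  ultimately show False using Hg by blast
qed

lemma H_eq: "H = {e, h, h2}" using three[OF eH hH h2H] hne h2_ne_e h2_ne_h by simp

lemma hh2: "h \<cdot> h2 = e"
proof -
  have "h \<cdot> h2 \<in> H" using Hcl hH h2H by blast
  moreover have "h \<cdot> h2 \<noteq> h" using lcan[OF hQ h2Q e_in] rid[OF hQ] h2_ne_e by metis
  moreover have "h \<cdot> h2 \<noteq> h2" using rcan[OF h2Q hQ e_in] lid[OF h2Q] hne by metis
  ultimately show ?thesis using H_eq by blast
qed

lemma h2h: "h2 \<cdot> h = e"
proof -
  have "h2 \<cdot> h \<in> H" using Hcl hH h2H by blast
  moreover have "h2 \<cdot> h \<noteq> h2" using lcan[OF h2Q hQ e_in] rid[OF h2Q] hne by metis
  moreover have "h2 \<cdot> h \<noteq> h" using rcan[OF hQ h2Q e_in] lid[OF hQ] h2_ne_e by metis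
  ultimately show ?thesis using H_eq by blast
qed

lemma h2h2: "h2 \<cdot> h2 = h"
proof -
  have "h2 \<cdot> h2 \<in> H" using Hcl h2H by blast
  moreover have "h2 \<cdot> h2 \<noteq> h2" using lcan[OF h2Q h2Q e_in] rid[OF h2Q] h2_ne_e by metis
  moreover have "h2 \<cdot> h2 \<noteq> e" using lcan[OF h2Q h2Q hQ] h2h h2_ne_h by metis
  ultimately show ?thesis using H_eq by blast
qed

lemma hh: "h \<cdot> h = h2" by (simp add: h2_def)

lemma ne1: "z \<in> Q \<Longrightarrow> h \<cdot> z \<noteq> z" using rcan[OF _ hQ e_in] lid hne by metis
lemma ne2: "z \<in> Q \<Longrightarrow> h2 \<cdot> z \<noteq> z" using rcan[OF _ h2Q e_in] lid h2_ne_e by metis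
lemma ne3: "z \<in> Q \<Longrightarrow> h \<cdot> z \<noteq> h2 \<cdot> z" using rcan[OF _ hQ h2Q] h2_ne_h by metis

lemma a1: "z \<in> Q \<Longrightarrow> h \<cdot> (h \<cdot> z) = h2 \<cdot> z"
proof -
  assume z: "z \<in> Q"
  obtain k where k: "k \<in> H" "(h \<cdot> h) \<cdot> z = k \<cdot> (h \<cdot> z)" using B2[OF z hQ hH] by blast
  have hz: "h \<cdot> z \<in> Q" using cl hQ z by blast
  have "k \<noteq> e" using k ne3[OF z] lid[OF hz] hh by metis
  moreover have "k \<noteq> h2"
  proof
    assume "k = h2"
    hence "h2 \<cdot> z = h2 \<cdot> (h \<cdot> z)" using k hh by simp
    hence "z = h \<cdot> z" using lcan[OF h2Q z hz] by blast
    thus False using ne1[OF z] by simp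
  qed
  ultimately have "k = h" using k H_eq by blast
  thus ?thesis using k hh by simp
qed

lemma a2: "z \<in> Q \<Longrightarrow> h2 \<cdot> (h \<cdot> z) = z"
proof -
  assume z: "z \<in> Q"
  obtain k where k: "k \<in> H" "(h2 \<cdot> h) \<cdot> z = k \<cdot> (h \<cdot> z)" using B2[OF z hQ h2H] by blast
  have hz: "h \<cdot> z \<in> Q" using cl hQ z by blast
  have kz: "z = k \<cdot> (h \<cdot> z)" using k h2h lid z by simp
  have "k \<noteq> e" using kz lid[OF hz] ne1[OF z] by metis
  moreover have "k \<noteq> h" using kz a1[OF z] ne2[OF z] by metis
  ultimately have "k = h2" using k H_eq by blast
  thus ?thesis using kz by simp
qed

lemma a3: "z \<in> Q \<Longrightarrow> h \<cdot> (h2 \<cdot> z) = z"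
proof -
  assume z: "z \<in> Q"
  obtain k where k: "k \<in> H" "(h \<cdot> h2) \<cdot> z = k \<cdot> (h2 \<cdot> z)" using B2[OF z h2Q hH] by blast
  have hz: "h2 \<cdot> z \<in> Q" using cl h2Q z by blast
  have hz1: "h \<cdot> z \<in> Q" using cl hQ z by blast
  have kz: "z = k \<cdot> (h2 \<cdot> z)" using k hh2 lid z by simp
  have "k \<noteq> e" using kz lid[OF hz] ne2[OF z] by metis
  moreover have "k \<noteq> h2"
  proof
    assume "k = h2"
    hence "h2 \<cdot> (h \<cdot> z) = h2 \<cdot> (h2 \<cdot> z)" using kz a2[OF z] by simp
    hence "h \<cdot> z = h2 \<cdot> z" using lcan[OF h2Q hz1 hz] by blast
    thus False using ne3[OF z] by simp
  qed
  ultimately have "k = h" using k H_eq by blast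
  thus ?thesis using kz by simp
qed

lemma a4: "z \<in> Q \<Longrightarrow> h2 \<cdot> (h2 \<cdot> z) = h \<cdot> z"
  using a1[of z] a2[of "h \<cdot> z"] cl hQ by metis

lemma Hassoc: assumes "a \<in> H" "b \<in> H" "z \<in> Q" shows "a \<cdot> (b \<cdot> z) = (a \<cdot> b) \<cdot> z"
proof -
  have a: "a = e \<or> a = h \<or> a = h2" and b: "b = e \<or> b = h \<or> b = h2" using assms H_eq by auto
  have bz: "b \<cdot> z \<in> Q" using assms HQ cl by blast
  show ?thesis
  proof (cases "a = e")
    case True then show ?thesis using lid[OF bz] lid assms HQ by auto
  next
    case False note ae = this
    show ?thesis
    proof (cases "b = e")
      case True then show ?thesis using lid assms rid HQ by auto
    next
      case False
      then show ?thesis using a b ae a1[OF assms(3)] a2[OF assms(3)] a3[OF assms(3)] a4[OF assms(3)]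
        hh hh2 h2h h2h2 lid[OF assms(3)] by auto
    qed
  qed
qed

lemma block_map:
  assumes gH: "\<And>k. k \<in> H \<Longrightarrow> \<exists>k'\<in>H. g (k \<cdot> z) = k' \<cdot> g z"
    and ginj: "\<And>u v. u \<in> Q \<Longrightarrow> v \<in> Q \<Longrightarrow> g u = g v \<Longrightarrow> u = v"
    and z: "z \<in> Q" and gz: "g z \<in> Q"
  shows "(g (h \<cdot> z) = h \<cdot> g z \<and> g (h2 \<cdot> z) = h2 \<cdot> g z) \<or>
         (g (h \<cdot> z) = h2 \<cdot> g z \<and> g (h2 \<cdot> z) = h \<cdot> g z)"
proof -
  obtain k1 where k1: "k1 \<in> H" "g (h \<cdot> z) = k1 \<cdot> g z" using gH hH by blast
  obtain k2 where k2: "k2 \<in> H" "g (h2 \<cdot> z) = k2 \<cdot> g z" using gH h2H by blast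
  have hz: "h \<cdot> z \<in> Q" "h2 \<cdot> z \<in> Q" using cl hQ h2Q z by auto
  have "k1 \<noteq> e" using k1 lid[OF gz] ginj[OF hz(1) z] ne1[OF z] by metis
  moreover have "k2 \<noteq> e" using k2 lid[OF gz] ginj[OF hz(2) z] ne2[OF z] by metis
  moreover have "k1 \<noteq> k2" using k1 k2 ginj[OF hz(1) hz(2)] ne3[OF z] by metis
  ultimately show ?thesis using k1 k2 H_eq by auto
qed

lemma Lmap: assumes y: "y \<in> Q"
  shows "(pw y i \<cdot> (h \<cdot> pw y k) = h \<cdot> pw y (i+k) \<and> pw y i \<cdot> (h2 \<cdot> pw y k) = h2 \<cdot> pw y (i+k)) \<or>
         (pw y i \<cdot> (h \<cdot> pw y k) = h2 \<cdot> pw y (i+k) \<and> pw y i \<cdot> (h2 \<cdot> pw y k) = h \<cdot> pw y (i+k))"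
proof -
  have pi: "pw y i \<in> Q" and pk: "pw y k \<in> Q" using pw_in y by auto
  have "((\<lambda>u. pw y i \<cdot> u) (h \<cdot> pw y k) = h \<cdot> (\<lambda>u. pw y i \<cdot> u) (pw y k) \<and>
         (\<lambda>u. pw y i \<cdot> u) (h2 \<cdot> pw y k) = h2 \<cdot> (\<lambda>u. pw y i \<cdot> u) (pw y k)) \<or>
        ((\<lambda>u. pw y i \<cdot> u) (h \<cdot> pw y k) = h2 \<cdot> (\<lambda>u. pw y i \<cdot> u) (pw y k) \<and>
         (\<lambda>u. pw y i \<cdot> u) (h2 \<cdot> pw y k) = h \<cdot> (\<lambda>u. pw y i \<cdot> u) (pw y k))"
  proof (rule block_map)
    show "\<And>ka. ka \<in> H \<Longrightarrow> \<exists>k'\<in>H. pw y i \<cdot> (ka \<cdot> pw y k) = k' \<cdot> (pw y i \<cdot> pw y k)"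
      using B1[OF pi pk] by blast
    show "\<And>u v. u \<in> Q \<Longrightarrow> v \<in> Q \<Longrightarrow> pw y i \<cdot> u = pw y i \<cdot> v \<Longrightarrow> u = v"
      using lcan[OF pi] by blast
    show "pw y k \<in> Q" by (rule pk)
    show "pw y i \<cdot> pw y k \<in> Q" using cl pi pk by blast
  qed
  then show ?thesis using pw_add[OF y, of i k] by simp
qed

lemma FW: assumes y: "y \<in> Q"
  shows "(h \<cdot> pw y q) \<cdot> (h \<cdot> y) = h \<cdot> (pw y q \<cdot> (h \<cdot> y)) \<and>
         (h2 \<cdot> pw y q) \<cdot> (h \<cdot> y) = h2 \<cdot> (pw y q \<cdot> (h \<cdot> y))"
proof -
  define w where "w = h \<cdot> y"
  have w: "w \<in> Q" using cl hQ y w_def by blast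
  have pq: "pw y q \<in> Q" using pw_in y by auto
  have bm: "((\<lambda>u. u \<cdot> w) (h \<cdot> pw y q) = h \<cdot> (\<lambda>u. u \<cdot> w) (pw y q) \<and>
         (\<lambda>u. u \<cdot> w) (h2 \<cdot> pw y q) = h2 \<cdot> (\<lambda>u. u \<cdot> w) (pw y q)) \<or>
        ((\<lambda>u. u \<cdot> w) (h \<cdot> pw y q) = h2 \<cdot> (\<lambda>u. u \<cdot> w) (pw y q) \<and>
         (\<lambda>u. u \<cdot> w) (h2 \<cdot> pw y q) = h \<cdot> (\<lambda>u. u \<cdot> w) (pw y q))"
  proof (rule block_map)
    show "\<And>ka. ka \<in> H \<Longrightarrow> \<exists>k'\<in>H. (ka \<cdot> pw y q) \<cdot> w = k' \<cdot> (pw y q \<cdot> w)"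
      using B2[OF w pq] by blast
    show "\<And>u v. u \<in> Q \<Longrightarrow> v \<in> Q \<Longrightarrow> u \<cdot> w = v \<cdot> w \<Longrightarrow> u = v"
      using rcan[OF w] by blast
    show "pw y q \<in> Q" by (rule pq)
    show "pw y q \<cdot> w \<in> Q" using cl pq w by blast
  qed
  obtain k' where k': "k' \<in> H" "pw y q \<cdot> w = k' \<cdot> (pw y q \<cdot> y)" using B1[OF pq y hH] w_def by blast
  have k'Q: "k' \<in> Q" using k' HQ by blast
  have pq1: "pw y q \<cdot> y = pw y (q+1)" using pw_add[OF y, of q 1] pw1[OF y] by simp
  have bo: "((h \<cdot> pw y q) \<cdot> w) \<cdot> pw y q = h \<cdot> ((pw y q \<cdot> w) \<cdot> pw y q)" using bol hQ pq w by blast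
  have r: "(pw y q \<cdot> w) \<cdot> pw y q = k' \<cdot> pw y (q+1+q)"
    using k' pq1 pw_add_r[OF y k'Q, of "q+1" q] by simp
  show ?thesis
  proof (rule ccontr)
    assume "\<not> ?thesis"
    with bm have c: "(h \<cdot> pw y q) \<cdot> w = h2 \<cdot> (pw y q \<cdot> w)" using w_def by auto
    have "((h \<cdot> pw y q) \<cdot> w) \<cdot> pw y q = ((h2 \<cdot> k') \<cdot> pw y (q+1)) \<cdot> pw y q"
      using c k' pq1 Hassoc[OF h2H k'(1) pw_in[OF y]] by simp
    also have "\<dots> = (h2 \<cdot> k') \<cdot> pw y (q+1+q)" using pw_add_r[OF y, of "h2 \<cdot> k'"] cl h2Q k'Q by blast
    finally have l: "((h \<cdot> pw y q) \<cdot> w) \<cdot> pw y q = (h2 \<cdot> k') \<cdot> pw y (q+1+q)" .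
    have rr: "h \<cdot> ((pw y q \<cdot> w) \<cdot> pw y q) = (h \<cdot> k') \<cdot> pw y (q+1+q)"
      using r Hassoc[OF hH k'(1) pw_in[OF y]] by simp
    have "(h2 \<cdot> k') \<cdot> pw y (q+1+q) = (h \<cdot> k') \<cdot> pw y (q+1+q)" using l rr bo by simp
    hence "h2 \<cdot> k' = h \<cdot> k'" using rcan pw_in[OF y] cl h2Q hQ k'Q by blast
    hence "h2 = h" using rcan k'Q h2Q hQ by blast
    thus False using h2_ne_h by simp
  qed
qed

lemma comm: assumes y: "y \<in> Q" shows "y \<cdot> h = h \<cdot> y"
proof -
  obtain M where M: "odd M" "pw y M = e" using odd_order[OF y fin od] by blast
  define p where "p = pw y"
  define w where "w = h \<cdot> y"
  define lam where "lam i k \<longleftrightarrow> p i \<cdot> (h \<cdot> p k) = h \<cdot> p (i+k)" for i k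
  have pQ: "p n \<in> Q" for n using pw_in y p_def by simp
  have wQ: "w \<in> Q" using cl hQ y w_def by blast
  have p1: "p 1 = y" using pw1 y p_def by simp
  have p0: "p 0 = e" using pw0 p_def by simp
  have padd: "p a \<cdot> p b = p (a + b)" for a b using pw_add y p_def by simp
  have paddr: "z \<in> Q \<Longrightarrow> (z \<cdot> p a) \<cdot> p b = z \<cdot> p (a + b)" for z a b using pw_add_r y p_def by simp
  have L1: "p i \<cdot> (h \<cdot> p k) = (if lam i k then h else h2) \<cdot> p (i+k)" for i k
    using Lmap[OF y, of i k] unfolding lam_def p_def[symmetric] using ne3 pQ by auto
  have L2: "p i \<cdot> (h2 \<cdot> p k) = (if lam i k then h2 else h) \<cdot> p (i+k)" for i k
    using Lmap[OF y, of i k] unfolding lam_def p_def[symmetric] using ne3 pQ by auto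
  have F: "(a \<cdot> p q) \<cdot> w = a \<cdot> (p q \<cdot> w)" if "a = h \<or> a = h2" for a q
    using FW[OF y, of q] that unfolding p_def w_def by auto
  have EB: "(if lam i 1 then h else h2) \<cdot> (if lam (Suc i) 1 then h else h2)
          = (if lam 1 1 then (if lam i 2 then h2 else h) else e)" for i
  proof -
    define a1 where "a1 = (if lam i 1 then h else h2)"
    define a2 where "a2 = (if lam (Suc i) 1 then h else h2)"
    define a3 where "a3 = (if lam 1 1 then h else h2)"
    have a1H: "a1 \<in> H" "a1 = h \<or> a1 = h2" and a2H: "a2 \<in> H" and a3H: "a3 \<in> H"
      using hH h2H a1_def a2_def a3_def by auto
    have a1Q: "a1 \<in> Q" and a2Q: "a2 \<in> Q" using a1H a2H HQ by auto
    have ra: "(p i \<cdot> w) \<cdot> w = p i \<cdot> (w \<cdot> w)"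
      using bol[OF pQ wQ e_in, of i] rid cl pQ wQ by simp
    have s1: "p i \<cdot> w = a1 \<cdot> p (Suc i)" using L1[of i 1] w_def p1 a1_def by simp
    have s2: "p (Suc i) \<cdot> w = a2 \<cdot> p (Suc (Suc i))" using L1[of "Suc i" 1] w_def p1 a2_def by simp
    have s3: "(p i \<cdot> w) \<cdot> w = (a1 \<cdot> a2) \<cdot> p (Suc (Suc i))"
      using s1 F[OF a1H(2), of "Suc i"] s2 Hassoc[OF a1H(1) a2H pQ] by simp
    have s4: "w \<cdot> w = (h \<cdot> a3) \<cdot> p 2"
    proof -
      have "w \<cdot> w = (h \<cdot> p 1) \<cdot> w" using w_def p1 by simp
      also have "\<dots> = h \<cdot> (p 1 \<cdot> w)" using F by simp
      also have "\<dots> = h \<cdot> (a3 \<cdot> p 2)" using L1[of 1 1] w_def p1 a3_def by (simp add: numeral_2_eq_2)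
      also have "\<dots> = (h \<cdot> a3) \<cdot> p 2" using Hassoc[OF hH a3H pQ] by simp
      finally show ?thesis .
    qed
    have s5: "p i \<cdot> (w \<cdot> w) = (if lam 1 1 then (if lam i 2 then h2 else h) else e) \<cdot> p (Suc (Suc i))"
    proof (cases "lam 1 1")
      case True
      then show ?thesis using s4 a3_def hh L2[of i 2] by (simp add: numeral_2_eq_2)
    next
      case False
      then show ?thesis using s4 a3_def hh2 lid[OF pQ] padd[of i 2] lid pQ by (simp add: numeral_2_eq_2)
    qed
    have "(a1 \<cdot> a2) \<cdot> p (Suc (Suc i)) = (if lam 1 1 then (if lam i 2 then h2 else h) else e) \<cdot> p (Suc (Suc i))"
      using ra s3 s5 by simp
    then have "a1 \<cdot> a2 = (if lam 1 1 then (if lam i 2 then h2 else h) else e)"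
      using rcan[OF pQ] cl a1Q a2Q hQ h2Q e_in by (simp split: if_splits)
    then show ?thesis using a1_def a2_def by simp
  qed
  have EB': "(lam 1 1 \<longrightarrow> (lam i 1 \<longleftrightarrow> lam (Suc i) 1)) \<and> (\<not> lam 1 1 \<longrightarrow> (lam i 1 \<longleftrightarrow> \<not> lam (Suc i) 1))" for i
    using EB[of i] hh hh2 h2h h2h2 hne h2_ne_e h2_ne_h
    by (cases "lam 1 1"; cases "lam i 1"; cases "lam (Suc i) 1"; cases "lam i 2") (auto simp: eq_commute[of e])
  have lam01: "lam 0 1" unfolding lam_def using p0 lid cl hQ pQ by simp
  have lamM: "lam M 1"
  proof -
    have "p (M + 1) = p 1" using padd[of M 1] M p_def lid pQ by simp
    thus ?thesis unfolding lam_def using M p_def lid cl hQ pQ by simp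
  qed
  have l11: "lam 1 1"
  proof (rule ccontr)
    assume n: "\<not> lam 1 1"
    have "lam i 1 \<longleftrightarrow> even i" for i
    proof (induction i)
      case 0 then show ?case using lam01 by simp
    next
      case (Suc i) then show ?case using EB'[of i] n by simp
    qed
    then show False using lamM M by simp
  qed
  have li: "lam i 1" for i
  proof (induction i)
    case 0 then show ?case using lam01 by simp
  next
    case (Suc i) then show ?case using EB'[of i] l11 by simp
  qed
  define j where "j = M div 2"
  have Mj: "M = Suc (2 * j)" using M(1) j_def by presburger
  have bo: "((y \<cdot> p j) \<cdot> w) \<cdot> p j = y \<cdot> ((p j \<cdot> w) \<cdot> p j)" using bol y pQ wQ by blast
  have e1: "y \<cdot> p j = p (Suc j)" using padd[of 1 j] p1 by simp
  have e2: "p (Suc j) \<cdot> w = h \<cdot> p (Suc (Suc j))" using li[of "Suc j"] unfolding lam_def w_def using p1 by simp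
  have e3: "(h \<cdot> p (Suc (Suc j))) \<cdot> p j = h \<cdot> p (Suc (Suc j) + j)" using paddr hQ by blast
  have e4: "p (Suc (Suc j) + j) = y"
  proof -
    have "Suc (Suc j) + j = M + 1" using Mj by simp
    thus ?thesis using padd[of M 1] M p_def lid y p1 by simp
  qed
  have e5: "p j \<cdot> w = h \<cdot> p (Suc j)" using li[of j] unfolding lam_def w_def using p1 by simp
  have e6: "(h \<cdot> p (Suc j)) \<cdot> p j = h"
  proof -
    have "Suc j + j = M" using Mj by simp
    thus ?thesis using paddr[OF hQ, of "Suc j" j] M p_def rid hQ by simp
  qed
  show ?thesis using bo e1 e2 e3 e4 e5 e6 by simp
qed

lemma assoc: assumes z: "z \<in> Q" and w: "w \<in> Q"
  shows "(h \<cdot> z) \<cdot> w = h \<cdot> (z \<cdot> w) \<and> z \<cdot> (h \<cdot> w) = h \<cdot> (z \<cdot> w)"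
proof -
  have zw: "z \<cdot> w \<in> Q" using cl z w by blast
  have R: "((\<lambda>u. u \<cdot> w) (h \<cdot> z) = h \<cdot> (\<lambda>u. u \<cdot> w) z \<and> (\<lambda>u. u \<cdot> w) (h2 \<cdot> z) = h2 \<cdot> (\<lambda>u. u \<cdot> w) z) \<or>
        ((\<lambda>u. u \<cdot> w) (h \<cdot> z) = h2 \<cdot> (\<lambda>u. u \<cdot> w) z \<and> (\<lambda>u. u \<cdot> w) (h2 \<cdot> z) = h \<cdot> (\<lambda>u. u \<cdot> w) z)"
    by (rule block_map) (use B2[OF w z] rcan[OF w] z zw in auto)
  have L: "((\<lambda>u. z \<cdot> u) (h \<cdot> w) = h \<cdot> (\<lambda>u. z \<cdot> u) w \<and> (\<lambda>u. z \<cdot> u) (h2 \<cdot> w) = h2 \<cdot> (\<lambda>u. z \<cdot> u) w) \<or>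
        ((\<lambda>u. z \<cdot> u) (h \<cdot> w) = h2 \<cdot> (\<lambda>u. z \<cdot> u) w \<and> (\<lambda>u. z \<cdot> u) (h2 \<cdot> w) = h \<cdot> (\<lambda>u. z \<cdot> u) w)"
    by (rule block_map) (use B1[OF z w] lcan[OF z] w zw in auto)
  have bo: "((z \<cdot> h) \<cdot> w) \<cdot> h = z \<cdot> ((h \<cdot> w) \<cdot> h)" using bol z w hQ by blast
  have c1: "z \<cdot> h = h \<cdot> z" using comm z by blast
  have hw: "h \<cdot> w \<in> Q" using cl hQ w by blast
  have c2: "(h \<cdot> w) \<cdot> h = h2 \<cdot> w" using comm[OF hw] a1[OF w] by simp
  have c3: "(a \<cdot> (z \<cdot> w)) \<cdot> h = (h \<cdot> a) \<cdot> (z \<cdot> w)" if "a \<in> H" for a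
  proof -
    have "a \<cdot> (z \<cdot> w) \<in> Q" using cl that HQ zw by blast
    thus ?thesis using comm Hassoc[OF hH that zw] by simp
  qed
  have bo2: "((h \<cdot> z) \<cdot> w) \<cdot> h = z \<cdot> (h2 \<cdot> w)" using bo c1 c2 by simp
  show ?thesis
  proof (cases "(h \<cdot> z) \<cdot> w = h \<cdot> (z \<cdot> w)")
    case True
    then have "z \<cdot> (h2 \<cdot> w) = h2 \<cdot> (z \<cdot> w)" using bo2 c3[OF hH] hh by simp
    then have "z \<cdot> (h \<cdot> w) = h \<cdot> (z \<cdot> w)" using L ne3[OF zw] by auto
    then show ?thesis using True by simp
  next
    case False
    then have "(h \<cdot> z) \<cdot> w = h2 \<cdot> (z \<cdot> w)" using R by auto
    then have "z \<cdot> (h2 \<cdot> w) = z \<cdot> w" using bo2 c3[OF h2H] hh2 lid[OF zw] by simp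
    then show ?thesis using L ne1[OF zw] ne2[OF zw] by auto
  qed
qed

lemma h_center: "h \<in> center Q (\<cdot>)"
proof -
  have n: "h \<in> nucleus Q (\<cdot>)"
    unfolding nucleus_def
  proof (intro CollectI conjI ballI)
    show "h \<in> Q" by (rule hQ)
    fix y z assume y: "y \<in> Q" and z: "z \<in> Q"
    show "h \<cdot> (y \<cdot> z) = h \<cdot> y \<cdot> z" using assoc[OF y z] by simp
    show "y \<cdot> (h \<cdot> z) = y \<cdot> h \<cdot> z" using assoc[OF y z] comm[OF y] by simp
    have yz: "y \<cdot> z \<in> Q" using cl y z by blast
    show "y \<cdot> (z \<cdot> h) = y \<cdot> z \<cdot> h" using assoc[OF y z] comm[OF z] comm[OF yz] by simp
  qed
  show ?thesis unfolding center_def using n comm by auto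
qed

end
lemma e_center: assumes "loop Q m e" shows "e \<in> center Q m"
proof -
  interpret qloop Q m e by (rule qloop.intro) (rule assms)
  show ?thesis unfolding center_def nucleus_def using e_in lid rid cl by auto
qed

lemma rbol_center:
  assumes lp: "loop Q m e" and rb: "right_bol Q m" and fin: "finite Q" and od: "odd (card Q)"
  and HQ: "H \<subseteq> Q" and eH: "e \<in> H" and Hcl: "\<And>a b. a \<in> H \<Longrightarrow> b \<in> H \<Longrightarrow> m a b \<in> H"
  and cH: "card H = 3"
  and B1: "\<And>x z k. x \<in> Q \<Longrightarrow> z \<in> Q \<Longrightarrow> k \<in> H \<Longrightarrow> \<exists>k'\<in>H. m x (m k z) = m k' (m x z)"
  and B2: "\<And>x z k. x \<in> Q \<Longrightarrow> z \<in> Q \<Longrightarrow> k \<in> H \<Longrightarrow> \<exists>k'\<in>H. m (m k z) x = m k' (m z x)"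
  shows "H \<subseteq> center Q m"
proof
  fix k assume k: "k \<in> H"
  show "k \<in> center Q m"
  proof (cases "k = e")
    case True then show ?thesis using e_center lp by simp
  next
    case False
    interpret rbolH Q m e H k
      by (unfold_locales) (use lp rb fin od HQ eH Hcl cH B1 B2 k False in auto)
    show ?thesis by (rule h_center)
  qed
qed

context qloop
begin

lemma rinv: "x \<in> Q \<Longrightarrow> y \<in> Q \<Longrightarrow> rtrans_inv Q (\<cdot>) x y \<in> Q \<and> rtrans_inv Q (\<cdot>) x y \<cdot> x = y"
proof -
  assume x: "x \<in> Q" and y: "y \<in> Q"
  have ex: "\<exists>!z. z \<in> Q \<and> z \<cdot> x = y" using rdiv[OF x y] rcan[OF x] by blast
  show ?thesis unfolding rtrans_inv_def using y theI'[OF ex] by simp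
qed

lemma rinv_eq: "x \<in> Q \<Longrightarrow> z \<in> Q \<Longrightarrow> rtrans_inv Q (\<cdot>) x (z \<cdot> x) = z"
  using rinv[of x "z \<cdot> x"] rcan cl by blast

lemma linv: "x \<in> Q \<Longrightarrow> y \<in> Q \<Longrightarrow> ltrans_inv Q (\<cdot>) x y \<in> Q \<and> x \<cdot> ltrans_inv Q (\<cdot>) x y = y"
proof -
  assume x: "x \<in> Q" and y: "y \<in> Q"
  have ex: "\<exists>!z. z \<in> Q \<and> x \<cdot> z = y" using ldiv[OF x y] lcan[OF x] by blast
  show ?thesis unfolding ltrans_inv_def using y theI'[OF ex] by simp
qed

lemma linv_eq: "x \<in> Q \<Longrightarrow> z \<in> Q \<Longrightarrow> ltrans_inv Q (\<cdot>) x (x \<cdot> z) = z"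
  using linv[of x "x \<cdot> z"] lcan cl by blast

lemma normal_img:
  assumes nH: "normal_subloop H Q (\<cdot>) e" and f: "f \<in> mlt_group Q (\<cdot>)" and fe: "f e = e" and k: "k \<in> H"
  shows "f k \<in> H"
proof -
  have "f \<in> inn_group Q (\<cdot>) e" unfolding inn_group_def using f fe by simp
  hence "f ` H = H" using nH unfolding normal_subloop_def by blast
  thus ?thesis using k by blast
qed

lemma normB:
  assumes nH: "normal_subloop H Q (\<cdot>) e" and x: "x \<in> Q" and z: "z \<in> Q" and k: "k \<in> H"
  shows "\<exists>k'\<in>H. x \<cdot> (k \<cdot> z) = k' \<cdot> (x \<cdot> z)"
    and "\<exists>k'\<in>H. (k \<cdot> z) \<cdot> x = k' \<cdot> (z \<cdot> x)"
    and "\<exists>k'\<in>H. (z \<cdot> k) \<cdot> x = (z \<cdot> x) \<cdot> k'"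
    and "\<exists>k'\<in>H. x \<cdot> (z \<cdot> k) = (x \<cdot> z) \<cdot> k'"
proof -
  have "subloop H Q (\<cdot>) e" using nH unfolding normal_subloop_def by blast
  hence HQ: "H \<subseteq> Q" unfolding subloop_def by blast
  have kQ: "k \<in> Q" using k HQ by blast
  have xz: "x \<cdot> z \<in> Q" and zx: "z \<cdot> x \<in> Q" using cl x z by auto
  have kz: "k \<cdot> z \<in> Q" and zk: "z \<cdot> k \<in> Q" using cl kQ z by auto
  note defs = ltrans_def rtrans_def
  show "\<exists>k'\<in>H. x \<cdot> (k \<cdot> z) = k' \<cdot> (x \<cdot> z)"
  proof -
    let ?f = "rtrans_inv Q (\<cdot>) (x \<cdot> z) \<circ> (ltrans Q (\<cdot>) x \<circ> (rtrans Q (\<cdot>) z \<circ> id))"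
    have f: "?f \<in> mlt_group Q (\<cdot>)" using x z xz by (intro mlt_group.intros) auto
    have fe: "?f e = e" using e_in lid z x xz rinv_eq[OF xz e_in] by (simp add: defs lid)
    have "?f k \<in> H" by (rule normal_img[OF nH f fe k])
    moreover have "?f k = rtrans_inv Q (\<cdot>) (x \<cdot> z) (x \<cdot> (k \<cdot> z))" using kQ kz by (simp add: defs)
    ultimately show ?thesis using rinv[OF xz, of "x \<cdot> (k \<cdot> z)"] cl x kz by metis
  qed
  show "\<exists>k'\<in>H. (k \<cdot> z) \<cdot> x = k' \<cdot> (z \<cdot> x)"
  proof -
    let ?f = "rtrans_inv Q (\<cdot>) (z \<cdot> x) \<circ> (rtrans Q (\<cdot>) x \<circ> (rtrans Q (\<cdot>) z \<circ> id))"
    have f: "?f \<in> mlt_group Q (\<cdot>)" using x z zx by (intro mlt_group.intros) auto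
    have fe: "?f e = e" using e_in lid z x zx rinv_eq[OF zx e_in] by (simp add: defs lid)
    have "?f k \<in> H" by (rule normal_img[OF nH f fe k])
    moreover have "?f k = rtrans_inv Q (\<cdot>) (z \<cdot> x) ((k \<cdot> z) \<cdot> x)" using kQ kz by (simp add: defs)
    ultimately show ?thesis using rinv[OF zx, of "(k \<cdot> z) \<cdot> x"] cl x kz by metis
  qed
  show "\<exists>k'\<in>H. (z \<cdot> k) \<cdot> x = (z \<cdot> x) \<cdot> k'"
  proof -
    let ?f = "ltrans_inv Q (\<cdot>) (z \<cdot> x) \<circ> (rtrans Q (\<cdot>) x \<circ> (ltrans Q (\<cdot>) z \<circ> id))"
    have f: "?f \<in> mlt_group Q (\<cdot>)" using x z zx by (intro mlt_group.intros) auto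
    have fe: "?f e = e" using e_in rid z x zx linv_eq[OF zx e_in] by (simp add: defs rid)
    have "?f k \<in> H" by (rule normal_img[OF nH f fe k])
    moreover have "?f k = ltrans_inv Q (\<cdot>) (z \<cdot> x) ((z \<cdot> k) \<cdot> x)" using kQ zk by (simp add: defs)
    ultimately show ?thesis using linv[OF zx, of "(z \<cdot> k) \<cdot> x"] cl x zk by metis
  qed
  show "\<exists>k'\<in>H. x \<cdot> (z \<cdot> k) = (x \<cdot> z) \<cdot> k'"
  proof -
    let ?f = "ltrans_inv Q (\<cdot>) (x \<cdot> z) \<circ> (ltrans Q (\<cdot>) x \<circ> (ltrans Q (\<cdot>) z \<circ> id))"
    have f: "?f \<in> mlt_group Q (\<cdot>)" using x z xz by (intro mlt_group.intros) auto
    have fe: "?f e = e" using e_in rid z x xz linv_eq[OF xz e_in] by (simp add: defs rid)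
    have "?f k \<in> H" by (rule normal_img[OF nH f fe k])
    moreover have "?f k = ltrans_inv Q (\<cdot>) (x \<cdot> z) (x \<cdot> (z \<cdot> k))" using kQ zk by (simp add: defs)
    ultimately show ?thesis using linv[OF xz, of "x \<cdot> (z \<cdot> k)"] cl x zk by metis
  qed
qed

end

lemma loop_op: assumes "loop Q m e" shows "loop Q (\<lambda>a b. m b a) e"
proof -
  have A: "e \<in> Q" "\<forall>x\<in>Q. \<forall>y\<in>Q. m x y \<in> Q" "\<forall>x\<in>Q. m e x = x \<and> m x e = x"
    "\<forall>x\<in>Q. bij_betw (\<lambda>y. m x y) Q Q \<and> bij_betw (\<lambda>y. m y x) Q Q"
    using assms unfolding loop_def by blast+
  show ?thesis unfolding loop_def
    by (intro conjI ballI) (use A in blast)+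
qed

lemma center_op: "center Q (\<lambda>a b. m b a) \<subseteq> center Q m"
proof
  fix x assume xc: "x \<in> center Q (\<lambda>a b. m b a)"
  have x: "x \<in> Q" using xc unfolding center_def nucleus_def by blast
  have c: "\<And>y z. y \<in> Q \<Longrightarrow> z \<in> Q \<Longrightarrow> m (m z y) x = m z (m y x) \<and> m (m z x) y = m z (m x y) \<and> m (m x z) y = m x (m z y)"
    using xc unfolding center_def nucleus_def by blast
  have cm: "\<And>y. y \<in> Q \<Longrightarrow> m y x = m x y" using xc unfolding center_def by blast
  have "x \<in> nucleus Q m" unfolding nucleus_def
  proof (intro CollectI conjI ballI)
    show "x \<in> Q" by (rule x)
    fix y z assume y: "y \<in> Q" and z: "z \<in> Q"
    show "m x (m y z) = m (m x y) z" using c[OF z y] by simp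
    show "m y (m x z) = m (m y x) z" using c[OF z y] by simp
    show "m y (m z x) = m (m y z) x" using c[OF z y] by simp
  qed
  thus "x \<in> center Q m" unfolding center_def using cm by auto
qed

lemma lb_op: assumes lb: "left_bol Q m" shows "right_bol Q (\<lambda>a b. m b a)"
  unfolding right_bol_def
proof (intro ballI)
  fix x y z assume xyz: "x \<in> Q" "y \<in> Q" "z \<in> Q"
  have lb': "\<forall>x\<in>Q. \<forall>y\<in>Q. \<forall>z\<in>Q. m y (m z (m y x)) = m (m y (m z y)) x"
    using lb unfolding left_bol_def by assumption
  show "m y (m z (m y x)) = m (m y (m z y)) x" using lb'[rule_format, OF xyz] .
qed

theorem theorem4p12:
  fixes Q H :: "'a set" and m :: "'a \<Rightarrow> 'a \<Rightarrow> 'a" and e :: 'a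
  assumes "loop Q m e"
    and "right_bol Q m \<or> left_bol Q m"
    and "finite Q" and "odd (card Q)"
    and "normal_subloop H Q m e" and "card H = 3"
  shows "H \<subseteq> center Q m"
proof -
  interpret qloop Q m e by (rule qloop.intro) (rule assms(1))
  have sl: "subloop H Q m e" using assms(5) unfolding normal_subloop_def by blast
  have sub: "H \<subseteq> Q" "e \<in> H" "\<And>a b. a \<in> H \<Longrightarrow> b \<in> H \<Longrightarrow> m a b \<in> H"
    using sl unfolding subloop_def by blast+
  from assms(2) show ?thesis
  proof
    assume rb: "right_bol Q m"
    show ?thesis
    proof (rule rbol_center[OF assms(1) rb assms(3,4) sub assms(6)])
      show "\<And>x z k. x \<in> Q \<Longrightarrow> z \<in> Q \<Longrightarrow> k \<in> H \<Longrightarrow> \<exists>k'\<in>H. m x (m k z) = m k' (m x z)"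
        by (rule normB(1)[OF assms(5)])
      show "\<And>x z k. x \<in> Q \<Longrightarrow> z \<in> Q \<Longrightarrow> k \<in> H \<Longrightarrow> \<exists>k'\<in>H. m (m k z) x = m k' (m z x)"
        by (rule normB(2)[OF assms(5)])
    qed
  next
    assume lb: "left_bol Q m"
    have rb': "right_bol Q (\<lambda>a b. m b a)" by (rule lb_op[OF lb])
    have "H \<subseteq> center Q (\<lambda>a b. m b a)"
    proof (rule rbol_center[OF loop_op[OF assms(1)] rb' assms(3,4) sub(1,2) _ assms(6)])
      show "\<And>a b. a \<in> H \<Longrightarrow> b \<in> H \<Longrightarrow> m b a \<in> H" using sub(3) by blast
      show "\<And>x z k. x \<in> Q \<Longrightarrow> z \<in> Q \<Longrightarrow> k \<in> H \<Longrightarrow> \<exists>k'\<in>H. m (m z k) x = m (m z x) k'"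
        by (rule normB(3)[OF assms(5)])
      show "\<And>x z k. x \<in> Q \<Longrightarrow> z \<in> Q \<Longrightarrow> k \<in> H \<Longrightarrow> \<exists>k'\<in>H. m x (m z k) = m (m x z) k'"
        by (rule normB(4)[OF assms(5)])
    qed
    thus ?thesis using center_op[of Q m] by (rule subset_trans)
  qed
qed

end
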